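(* Let $p\geq3$ be a prime and $n\geq 1$. If $p>n$ then $\mathcal{CP}^{\mathsf{s}}_p(n)=\mathcal{SP}(n)$, and if $p=n$ then $\mathcal{CP}^{\mathsf{s}}_p(n)=\mathcal{SP}(n)\setminus\{(n)\}$.
   Context: $\mathcal{SP}(n)$ is the set of strict partitions $\xi=(\xi_1>\xi_2>\cdots)$ of $n$. $\mathcal{CP}^{\mathsf{s}}_p(n)$ is the set of $\xi\in\mathcal{SP}(n)$ such that either $1\leq\xi_1\leq\frac{p+1}{2}$, or there is an integer $u$ with $1\leq u\leq\frac{p-3}{2}$, $\xi_1=p-u$ and $\xi_2\leq u$. *)

theory Defs
  imports Main "HOL-Computational_Algebra.Primes"
begin

definition SP :: "nat \<Rightarrow> nat list set" where
  "SP n = {xi. sorted_wrt (>) xi \<and> (\<forall>x\<in>set xi. 0 < x) \<and> sum_list xi = n}"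

text \<open>Part xi_i (1-indexed), with the convention xi_i = 0 beyond the length.\<close>
definition part :: "nat list \<Rightarrow> nat \<Rightarrow> nat" where
  "part xi i = (if 1 \<le> i \<and> i \<le> length xi then xi ! (i - 1) else 0)"

definition CPs :: "nat \<Rightarrow> nat \<Rightarrow> nat list set" where
  "CPs p n = {xi \<in> SP n.
      (1 \<le> part xi 1 \<and> 2 * part xi 1 \<le> p + 1)
    \<or> (\<exists>u::nat. 1 \<le> u \<and> 2 * u + 3 \<le> p \<and> part xi 1 = p - u \<and> part xi 2 \<le> u)}"

end

theory Submission
  imports Defs
begin

lemma part_bounds:
  assumes "xi \<in> SP n" "n \<ge> 1"
  shows "1 \<le> part xi 1 \<and> part xi 1 + part xi 2 \<le> n \<and> (part xi 1 = n \<longrightarrow> xi = [n])"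
proof (cases xi)
  case Nil then show ?thesis using assms by (simp add: SP_def)
next
  case (Cons a rest)
  show ?thesis
  proof (cases rest)
    case Nil then show ?thesis using assms Cons by (simp add: SP_def part_def)
  next
    case (Cons b r)
    with \<open>xi = a # rest\<close> assms show ?thesis by (auto simp: SP_def part_def)
  qed
qed

theorem lemma3p19:
  fixes p n :: nat
  assumes "prime p" and "p \<ge> 3" and "n \<ge> 1"
  shows "(p > n \<longrightarrow> CPs p n = SP n) \<and> (p = n \<longrightarrow> CPs p n = SP n - {[n]})"
proof -
  have odd: "odd p" using assms(1,2) prime_odd_nat by fastforce
  have main: "xi \<in> CPs p n" if "xi \<in> SP n" "n \<le> p" "xi \<noteq> [p]" for xi
  proof -
    from part_bounds[OF that(1) assms(3)] have h: "1 \<le> part xi 1" "part xi 1 + part xi 2 \<le> n"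
      "part xi 1 = n \<Longrightarrow> xi = [n]" by auto
    have lt: "part xi 1 < p" using h that by (cases "n = p") (auto simp: nat_less_le)
    show ?thesis
    proof (cases "2 * part xi 1 \<le> p + 1")
      case True then show ?thesis using that h by (simp add: CPs_def)
    next
      case False
      hence "2 * part xi 1 \<ge> p + 3" using odd by presburger
      then show ?thesis using that h lt unfolding CPs_def
        by (intro CollectI conjI disjI2 exI[of _ "p - part xi 1"]) auto
    qed
  qed
  have notin: "[p] \<notin> CPs p n" using assms(2) by (auto simp: CPs_def part_def)
  have sub: "CPs p n \<subseteq> SP n" by (auto simp: CPs_def)
  have A: "p > n \<longrightarrow> CPs p n = SP n"
  proof
    assume "p > n"
    have "[p] \<notin> SP n" using \<open>p > n\<close> by (auto simp: SP_def)
    then show "CPs p n = SP n" using sub main \<open>p > n\<close> by (metis less_imp_le subsetI subset_antisym)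
  qed
  have B: "p = n \<longrightarrow> CPs p n = SP n - {[n]}"
    using sub main notin by auto
  show ?thesis using A B by blast
qed

end
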